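(* Let $D$ be a period domain for polarized Hodge structures of weight $4$, $F\in D$, and $E\subset\mathfrak g^{-1,1}$ an integral element of the infinitesimal period relation at $F$ (i.e. an abelian subspace). Let $\zeta\in H_{\mathbb R}\cap H^{2,2}_F$, let $E_\zeta=\{\varphi\in E:\varphi(\zeta)=0\text{ in }H^{1,3}\}$, and let $$\sigma_\zeta=\dim\,\mathrm{Image}\{E_\zeta\otimes H^{4,0}\to H^{3,1},\ \varphi\otimes\omega\mapsto\varphi(\omega)\}.$$ Then $\mathrm{codim}_E E_\zeta\le h^{1,3}-\sigma_\zeta$.
   Context: $H$ is a finite-dimensional $\mathbb Q$-vector space with non-degenerate symmetric bilinear form $Q$; a polarized Hodge structure of weight 4 is $H_{\mathbb C}=\bigoplus_{p+q=4}H^{p,q}$, $\overline{H^{p,q}}=H^{q,p}$, $F^p=\bigoplus_{p'\ge p}H^{p',4-p'}$, $Q(F^p,F^{5-p})=0$, $Q(Cu,\bar u)>0$ for $u\neq 0$ ($C=i^{p-q}$ on $H^{p,q}$); $D$ is the period domain of such structures with fixed Hodge numbers $h^{p,q}$. $\mathfrak g$ is the Lie algebra of $\mathrm{Aut}(H,Q)$ and $\mathfrak g^{-1,1}=\{X\in\mathfrak g_{\mathbb C}:X(H^{p,q})\subset H^{p-1,q+1}\ \forall p,q\}$; it is the fibre at $F$ of the horizontal distribution whose annihilator $I$ is the infinitesimal period relation. Integral elements of $I$ at $F$ are the subspaces $E\subset\mathfrak g^{-1,1}$ with $[\varphi,\psi]=0$ for all $\varphi,\psi\in E$. $E_\zeta$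 is the intersection of $E$ with the tangent space at $F$ of the Noether–Lefschetz locus $D_\zeta=\{F'\in D:\zeta\in H^{2,2}_{F'}\}$. *)

theory Defs
  imports "HOL-Analysis.Analysis"
begin

text \<open>Concrete model. $H_{\mathbb C}$ = complex^'n (standard basis = a rational basis of $H$),
  $H = H_{\mathbb Q}$ = vectors with rational entries, $H_{\mathbb R}$ = vectors with real entries,
  complex conjugation = entrywise conjugation.\<close>

definition HQ :: "(complex^'n) set" where
  "HQ = {u. \<forall>i. u$i \<in> \<rat>}"

definition HR :: "(complex^'n) set" where
  "HR = {u. \<forall>i. u$i \<in> \<real>}"

definition cconj :: "complex^'n \<Rightarrow> complex^'n" where
  "cconj u = (\<chi> i. cnj (u$i))"

definition qf :: "complex^'n^'n \<Rightarrow> complex^'n \<Rightarrow> complex^'n \<Rightarrow> complex" where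
  "qf Qm u v = (\<Sum>i\<in>UNIV. \<Sum>j\<in>UNIV. u$i * Qm$i$j * v$j)"

definition rational_form :: "complex^'n^'n \<Rightarrow> bool" where
  "rational_form Qm \<longleftrightarrow> (\<forall>i j. Qm$i$j \<in> \<rat>) \<and> transpose Qm = Qm \<and>
     (\<forall>u\<in>HQ. (\<forall>v\<in>HQ. qf Qm u v = 0) \<longrightarrow> u = 0)"

text \<open>Hodge filtration: Hs p is H^{p,4-p}; F^p = sum of H^{p',4-p'} for p \<le> p' \<le> 4\<close>
definition Fil :: "(nat \<Rightarrow> (complex^'n) set) \<Rightarrow> nat \<Rightarrow> (complex^'n) set" where
  "Fil Hs p = {(\<Sum>p'\<in>{p..4}. w p') | w. \<forall>p'\<in>{p..4}. w p' \<in> Hs p'}"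

text \<open>polarized Hodge structure of weight 4 on (H,Q); the Weil operator C acts as
  i^(p-q) on H^{p,q}, written out on the (unique) Hodge decomposition of u\<close>
definition pol_hodge4 :: "complex^'n^'n \<Rightarrow> (nat \<Rightarrow> (complex^'n) set) \<Rightarrow> bool" where
  "pol_hodge4 Qm Hs \<longleftrightarrow>
     (\<forall>p\<le>4. vec.subspace (Hs p)) \<and>
     (\<forall>u. \<exists>w. (\<forall>p\<le>4. w p \<in> Hs p) \<and> u = (\<Sum>p\<le>4. w p)) \<and>
     (\<forall>w. (\<forall>p\<le>4. w p \<in> Hs p) \<and> (\<Sum>p\<le>4. w p) = 0 \<longrightarrow> (\<forall>p\<le>4. w p = 0)) \<and>
     (\<forall>p\<le>4. cconj ` Hs p = Hs (4 - p)) \<and>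
     (\<forall>p\<le>5. \<forall>u\<in>Fil Hs p. \<forall>v\<in>Fil Hs (5 - p). qf Qm u v = 0) \<and>
     (\<forall>w. (\<forall>p\<le>4. w p \<in> Hs p) \<and> (\<exists>p\<le>4. w p \<noteq> 0) \<longrightarrow>
        (let u = (\<Sum>p\<le>4. w p);
             Cu = (\<Sum>p\<le>4. (\<i> powi (int p - int (4 - p))) *s w p);
             z = qf Qm Cu (cconj u)
         in Im z = 0 \<and> Re z > 0))"

definition mscale :: "complex \<Rightarrow> complex^'n^'n \<Rightarrow> complex^'n^'n" where
  "mscale c A = (\<chi> i j. c * A$i$j)"

interpretation mat: vector_space "mscale :: complex \<Rightarrow> complex^'n^'n \<Rightarrow> complex^'n^'n"
  by unfold_locales (simp_all add: mscale_def vec_eq_iff algebra_simps)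

definition gC :: "complex^'n^'n \<Rightarrow> (complex^'n^'n) set" where
  "gC Qm = {X. \<forall>u v. qf Qm (X *v u) v + qf Qm u (X *v v) = 0}"

text \<open>g^{-1,1}: X(H^{p,q}) \<subseteq> H^{p-1,q+1}, with H^{-1,5} = 0\<close>
definition gm11 :: "complex^'n^'n \<Rightarrow> (nat \<Rightarrow> (complex^'n) set) \<Rightarrow> (complex^'n^'n) set" where
  "gm11 Qm Hs = {X \<in> gC Qm. \<forall>p\<le>4. \<forall>v\<in>Hs p. X *v v \<in> (if p = 0 then {0} else Hs (p - 1))}"

definition integral_element :: "complex^'n^'n \<Rightarrow> (nat \<Rightarrow> (complex^'n) set) \<Rightarrow> (complex^'n^'n) set \<Rightarrow> bool" where
  "integral_element Qm Hs E \<longleftrightarrow> mat.subspace E \<and> E \<subseteq> gm11 Qm Hs \<and>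
     (\<forall>\<phi>\<in>E. \<forall>\<psi>\<in>E. \<phi> ** \<psi> - \<psi> ** \<phi> = 0)"

definition E_zeta :: "(complex^'n^'n) set \<Rightarrow> complex^'n \<Rightarrow> (complex^'n^'n) set" where
  "E_zeta E \<zeta> = {\<phi> \<in> E. \<phi> *v \<zeta> = 0}"

text \<open>sigma_zeta = dim of the image of E_zeta \<otimes> H^{4,0} \<rightarrow> H^{3,1}, i.e. of the span of the \<phi>(\<omega>)\<close>
definition sigma_zeta :: "(nat \<Rightarrow> (complex^'n) set) \<Rightarrow> (complex^'n^'n) set \<Rightarrow> complex^'n \<Rightarrow> nat" where
  "sigma_zeta Hs E \<zeta> = vec.dim (vec.span {\<phi> *v \<omega> | \<phi> \<omega>. \<phi> \<in> E_zeta E \<zeta> \<and> \<omega> \<in> Hs 4})"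

end

theory Submission
  imports Defs
begin

definition hm :: "complex^('n::finite\<times>'n) \<Rightarrow> complex^'n^'n" where
  "hm v = (\<chi> i j. v$(i,j))"

lemma hm_linear: "Vector_Spaces.linear ((*s) :: complex \<Rightarrow> complex^('n::finite\<times>'n) \<Rightarrow> _) mscale hm"
  unfolding Vector_Spaces.linear_iff
  by (auto simp: hm_def mscale_def vec_eq_iff vec.vector_space_axioms mat.vector_space_axioms)

lemma hm_inj: "inj hm"
  unfolding inj_on_def hm_def by (auto simp: vec_eq_iff)

lemma hm_surj: "surj hm"
proof -
  have "A = hm (\<chi> p. A$(fst p)$(snd p))" for A :: "complex^'n^'n"
    by (simp add: hm_def vec_eq_iff)
  then show ?thesis by blast
qed

interpretation hmp: finite_dimensional_vector_space_pair_1
  "(*s) :: complex \<Rightarrow> complex^('n::finite\<times>'n) \<Rightarrow> _" cart_basis "mscale :: complex \<Rightarrow> complex^'n^'n \<Rightarrow> _"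
  by unfold_locales

interpretation matf: finite_dimensional_vector_space "mscale :: complex \<Rightarrow> complex^'n^'n \<Rightarrow> _"
  "hm ` cart_basis"
proof unfold_locales
  show "finite (hm ` cart_basis)" using vec.finite_Basis by (rule finite_imageI)
  show "mat.independent (hm ` cart_basis)"
    by (rule hmp.linear_independent_injective_image[OF hm_linear vec.independent_Basis])
       (meson hm_inj inj_on_subset subset_UNIV)
  show "mat.span (hm ` cart_basis) = UNIV"
    using hmp.linear_span_image[OF hm_linear, of cart_basis] vec.span_Basis hm_surj by metis
qed

interpretation mv: vector_space_pair "mscale :: complex \<Rightarrow> complex^'n^'n \<Rightarrow> _"
  "(*s) :: complex \<Rightarrow> complex^'m \<Rightarrow> _"
  by unfold_locales

lemma rank_nullity_le:
  fixes f :: "complex^'n^'n \<Rightarrow> complex^'m"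
  assumes lin: "Vector_Spaces.linear mscale (*s) f" and E: "mat.subspace E"
  shows "mat.dim E \<le> mat.dim {x\<in>E. f x = 0} + vec.dim (f ` E)"
proof -
  interpret lf: Vector_Spaces.linear mscale "(*s)" f by (rule lin)
  define K where "K = {x\<in>E. f x = 0}"
  obtain BK where BK: "BK \<subseteq> K" "mat.independent BK" "K \<subseteq> mat.span BK" "card BK = mat.dim K"
    using mat.basis_exists by blast
  obtain D where D: "D \<subseteq> f ` E" "vec.independent D" "f ` E \<subseteq> vec.span D" "card D = vec.dim (f ` E)"
    using vec.basis_exists by blast
  have fBK: "finite BK" using matf.finiteI_independent BK(2) .
  have fD: "finite D" using vec.finiteI_independent D(2) .
  have "\<forall>y\<in>D. \<exists>x\<in>E. f x = y" using D(1) by blast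
  then obtain p where p: "\<And>y. y \<in> D \<Longrightarrow> p y \<in> E \<and> f (p y) = y" by metis
  define P where "P = p ` D"
  have PE: "P \<subseteq> E" using p P_def by auto
  have fP: "f ` P = D" using p unfolding P_def by (auto simp: image_image)
  have "E \<subseteq> mat.span (BK \<union> P)"
  proof
    fix x assume x: "x \<in> E"
    have "f x \<in> vec.span (f ` P)" using D(3) x fP by auto
    then obtain z where z: "z \<in> mat.span P" "f z = f x"
      using lf.span_image[of P] by auto
    have zE: "z \<in> E" using z(1) mat.span_minimal[OF PE E] by auto
    have "x - z \<in> K" unfolding K_def using mat.subspace_diff[OF E x zE] lf.diff z(2) by simp
    then have "x - z \<in> mat.span (BK \<union> P)" using BK(3) mat.span_mono[of BK "BK \<union> P"] by auto
    moreover have "z \<in> mat.span (BK \<union> P)" using z(1) mat.span_mono[of P "BK \<union> P"] by auto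
    ultimately have "(x - z) + z \<in> mat.span (BK \<union> P)" by (rule mat.span_add)
    then show "x \<in> mat.span (BK \<union> P)" by simp
  qed
  then have "mat.dim E \<le> card (BK \<union> P)"
    using mat.dim_le_card fBK fD P_def by blast
  also have "\<dots> \<le> card BK + card P" by (rule card_Un_le)
  also have "card P \<le> card D" unfolding P_def using card_image_le fD by blast
  finally show ?thesis using BK(4) D(4) K_def by simp
qed

lemma cconj_add: "cconj (x + y) = cconj x + cconj y"
  by (simp add: cconj_def vec_eq_iff)
lemma cconj_scale: "cconj (c *s x) = cnj c *s cconj x"
  by (simp add: cconj_def vec_eq_iff)
lemma cconj_0: "cconj 0 = 0"
  by (simp add: cconj_def vec_eq_iff)
lemma cconj_cconj: "cconj (cconj x) = x"
  by (simp add: cconj_def vec_eq_iff)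

lemma cconj_span: "x \<in> vec.span S \<Longrightarrow> cconj x \<in> vec.span (cconj ` S)"
proof (induction rule: vec.span_induct)
  case base
  show ?case by (auto simp: vec.subspace_def cconj_add cconj_scale cconj_0
      intro: vec.span_zero vec.span_add vec.span_scale)
next
  case (step x) then show ?case by (simp add: vec.span_base)
qed

lemma dim_cconj_le: "vec.dim (cconj ` X) \<le> vec.dim X"
proof -
  obtain B where B: "B \<subseteq> X" "vec.independent B" "X \<subseteq> vec.span B" "card B = vec.dim X"
    using vec.basis_exists by blast
  have fB: "finite B" using vec.finiteI_independent B(2) .
  have "cconj ` X \<subseteq> vec.span (cconj ` B)" using B(3) cconj_span by blast
  then have "vec.dim (cconj ` X) \<le> card (cconj ` B)" using vec.dim_le_card fB by blast
  also have "\<dots> \<le> card B" using card_image_le fB by blast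
  finally show ?thesis using B(4) by simp
qed

lemma qf_add2: "qf Qm x (a + b) = qf Qm x a + qf Qm x b"
  by (simp add: qf_def distrib_left sum.distrib)
lemma qf_scale2: "qf Qm x (c *s b) = c * qf Qm x b"
  by (simp add: qf_def sum_distrib_left algebra_simps)
lemma qf_zero2: "qf Qm x 0 = 0"
  by (simp add: qf_def)
lemma qf_zero1: "qf Qm 0 x = 0"
  by (simp add: qf_def)
lemma qf_neg1: "qf Qm (- w) x = - qf Qm w x"
  by (simp add: qf_def sum_negf)
lemma qf_sym: "transpose Qm = Qm \<Longrightarrow> qf Qm u v = qf Qm v u"
proof -
  assume "transpose Qm = Qm"
  then have s: "Qm$i$j = Qm$j$i" for i j
  proof -
    have "Qm$i$j = (transpose Qm)$i$j" using \<open>transpose Qm = Qm\<close> by simp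
    also have "\<dots> = Qm$j$i" by (simp add: transpose_def)
    finally show ?thesis .
  qed
  have "qf Qm u v = (\<Sum>j\<in>UNIV. \<Sum>i\<in>UNIV. u$i * Qm$i$j * v$j)"
    unfolding qf_def by (rule sum.swap)
  also have "\<dots> = qf Qm v u" unfolding qf_def
    by (intro sum.cong refl) (simp add: s mult.commute mult.left_commute)
  finally show ?thesis .
qed

lemma qf_subspace: "vec.subspace {y. qf Qm x y = 0}"
  by (simp add: vec.subspace_def qf_add2 qf_scale2 qf_zero2)

theorem proposition5p7:
  fixes Qm :: "complex^'n^'n" and Hs :: "nat \<Rightarrow> (complex^'n) set"
    and E :: "(complex^'n^'n) set" and \<zeta> :: "complex^'n"
  assumes "rational_form Qm"
    and "pol_hodge4 Qm Hs"
    and "integral_element Qm Hs E"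
    and "\<zeta> \<in> HR" and "\<zeta> \<in> Hs 2"
  shows "int (mat.dim E) - int (mat.dim (E_zeta E \<zeta>))
           \<le> int (vec.dim (Hs 1)) - int (sigma_zeta Hs E \<zeta>)"
proof -
  have symQ: "transpose Qm = Qm"
    using assms(1)[unfolded rational_form_def, THEN conjunct2, THEN conjunct1] .
  note hd = assms(2)[unfolded pol_hodge4_def]
  have sub0: "\<forall>p\<le>4. vec.subspace (Hs p)" using hd[THEN conjunct1] .
  have sub: "\<And>p. p \<le> 4 \<Longrightarrow> vec.subspace (Hs p)" using sub0 by simp
  have cc: "\<forall>p\<le>4. cconj ` Hs p = Hs (4 - p)"
    using hd[THEN conjunct2, THEN conjunct2, THEN conjunct2, THEN conjunct1] .
  have conj31: "cconj ` Hs 3 = Hs 1" using cc[rule_format, of 3] by simp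
  note pos = hd[THEN conjunct2, THEN conjunct2, THEN conjunct2, THEN conjunct2, THEN conjunct2, rule_format]
  have ES: "mat.subspace E" and Eg: "E \<subseteq> gm11 Qm Hs"
    and comm: "\<And>\<phi> \<psi>. \<phi> \<in> E \<Longrightarrow> \<psi> \<in> E \<Longrightarrow> \<phi> ** \<psi> - \<psi> ** \<phi> = 0"
    using assms(3) unfolding integral_element_def by blast+
  define f where "f = (\<lambda>\<phi>::complex^'n^'n. \<phi> *v \<zeta>)"
  have fs: "(mscale c \<phi>) *v \<zeta> = c *s (\<phi> *v \<zeta>)" for c \<phi>
    by (simp add: vec_eq_iff matrix_vector_mult_def mscale_def sum_distrib_left mult.assoc)
  have flin: "Vector_Spaces.linear mscale (*s) f"
    unfolding Vector_Spaces.linear_iff f_def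
    by (simp add: fs matrix_vector_mult_add_rdistrib vec.vector_space_axioms mat.vector_space_axioms)
  have EZ: "E_zeta E \<zeta> = {x\<in>E. f x = 0}" unfolding E_zeta_def f_def by simp
  have rn: "mat.dim E \<le> mat.dim (E_zeta E \<zeta>) + vec.dim (f ` E)"
    unfolding EZ by (rule rank_nullity_le[OF flin ES])
  define S where "S = {\<phi> *v \<omega> | \<phi> \<omega>. \<phi> \<in> E_zeta E \<zeta> \<and> \<omega> \<in> Hs 4}"
  have sig: "sigma_zeta Hs E \<zeta> = vec.dim S" unfolding sigma_zeta_def S_def by simp
  define V where "V = f ` E"
  define W where "W = vec.span (cconj ` S)"
  have VS: "vec.subspace V" unfolding V_def
    using mv.linear_subspace_image[OF flin ES] .
  have WS: "vec.subspace W" unfolding W_def by (rule vec.subspace_span)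
  have S3: "S \<subseteq> Hs 3"
  proof
    fix y assume "y \<in> S"
    then obtain \<psi> \<omega> where y: "y = \<psi> *v \<omega>" "\<psi> \<in> E" "\<omega> \<in> Hs 4"
      unfolding S_def E_zeta_def by blast
    have "\<psi> \<in> gm11 Qm Hs" using y Eg by blast
    then have "\<forall>p\<le>4. \<forall>v\<in>Hs p. \<psi> *v v \<in> (if p = 0 then {0} else Hs (p - 1))"
      unfolding gm11_def by blast
    from this[rule_format, of 4 \<omega>] show "y \<in> Hs 3" using y(1) y(3) by simp
  qed
  have V1: "V \<subseteq> Hs 1"
  proof
    fix y assume "y \<in> V"
    then obtain \<phi> where y: "y = \<phi> *v \<zeta>" "\<phi> \<in> E" unfolding V_def f_def by blast
    have "\<phi> \<in> gm11 Qm Hs" using y Eg by blast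
    then have "\<forall>p\<le>4. \<forall>v\<in>Hs p. \<phi> *v v \<in> (if p = 0 then {0} else Hs (p - 1))"
      unfolding gm11_def by blast
    from this[rule_format, of 2 \<zeta>] show "y \<in> Hs 1" using y(1) assms(5) by simp
  qed
  have W1: "W \<subseteq> Hs 1" unfolding W_def
    using vec.span_minimal[of "cconj ` S" "Hs 1"] sub[of 1] S3 conj31 by auto
  have orth: "qf Qm x y = 0" if x: "x \<in> V" and y: "y \<in> S" for x y
  proof -
    obtain \<phi> where xx: "x = \<phi> *v \<zeta>" "\<phi> \<in> E" using x unfolding V_def f_def by blast
    obtain \<psi> \<omega> where yy: "y = \<psi> *v \<omega>" "\<psi> \<in> E" "\<psi> *v \<zeta> = 0"
      using y unfolding S_def E_zeta_def by blast
    have g\<phi>: "\<phi> \<in> gC Qm" and g\<psi>: "\<psi> \<in> gC Qm" using xx yy Eg unfolding gm11_def by blast+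
    have c: "\<phi> ** \<psi> = \<psi> ** \<phi>" using comm[OF xx(2) yy(2)] right_minus_eq by blast
    have e1: "qf Qm (\<phi> *v \<zeta>) (\<psi> *v \<omega>) + qf Qm \<zeta> (\<phi> *v (\<psi> *v \<omega>)) = 0"
      using g\<phi> unfolding gC_def by blast
    have e2: "qf Qm (\<psi> *v \<zeta>) (\<phi> *v \<omega>) + qf Qm \<zeta> (\<psi> *v (\<phi> *v \<omega>)) = 0"
      using g\<psi> unfolding gC_def by blast
    have "qf Qm x y = - qf Qm \<zeta> (\<phi> *v (\<psi> *v \<omega>))"
      using e1 unfolding xx yy eq_neg_iff_add_eq_0 .
    also have "\<phi> *v (\<psi> *v \<omega>) = \<psi> *v (\<phi> *v \<omega>)"
      by (simp only: matrix_vector_mul_assoc c)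
    also have "qf Qm \<zeta> (\<psi> *v (\<phi> *v \<omega>)) = - qf Qm (\<psi> *v \<zeta>) (\<phi> *v \<omega>)"
      using e2 by (simp add: add_eq_0_iff)
    finally show ?thesis using yy(3) by (simp add: qf_zero1)
  qed
  have int0: "x = 0" if xV: "x \<in> V" and xW: "x \<in> W" for x
  proof -
    define w0 where "w0 = cconj x"
    have w0S: "w0 \<in> vec.span S" using cconj_span[OF xW[unfolded W_def]]
      unfolding w0_def by (simp add: image_image cconj_cconj)
    have w03: "w0 \<in> Hs 3" using w0S vec.span_minimal[OF S3 sub[of 3]] by auto
    have q0: "qf Qm x w0 = 0"
      using vec.span_induct[OF w0S qf_subspace[of Qm x]] orth[OF xV] by auto
    show "x = 0"
    proof (rule ccontr)
      assume "x \<noteq> 0"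
      then have nz: "w0 \<noteq> 0" unfolding w0_def by (metis cconj_0 cconj_cconj)
      define ww where "ww = (\<lambda>p::nat. if p = 3 then w0 else 0)"
      have h1: "\<forall>p\<le>4. ww p \<in> Hs p" using w03 sub vec.subspace_0 unfolding ww_def by auto
      have h2: "\<exists>p\<le>4. ww p \<noteq> 0" using nz unfolding ww_def by (intro exI[of _ 3]) auto
      have su: "(\<Sum>p\<le>4. ww p) = w0" unfolding ww_def by (simp add: sum.delta')
      have tm: "(\<i> powi (int p - int (4 - p))) *s ww p = (if p = 3 then - w0 else 0)" for p
      proof (cases "p = 3")
        case True
        have "\<i> powi (int p - int (4 - p)) = -1" using True by simp
        then show ?thesis using True unfolding ww_def by (simp add: vec_eq_iff)
      next
        case False
        then show ?thesis unfolding ww_def by simp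
      qed
      have sc: "(\<Sum>p\<le>(4::nat). (\<i> powi (int p - int (4 - p))) *s ww p) = - w0"
        unfolding tm by (simp add: sum.delta')
      have "qf Qm (- w0) (cconj w0) = 0" using q0 qf_sym[OF symQ]
        by (simp add: qf_neg1 w0_def cconj_cconj)
      then show False using pos[OF conjI[OF h1 h2]] su sc by (simp add: Let_def)
    qed
  qed
  have int0': "V \<inter> W = {0}"
    using int0 vec.subspace_0[OF VS] vec.subspace_0[OF WS] by auto
  have "vec.dim {x + y |x y. x \<in> V \<and> y \<in> W} + vec.dim (V \<inter> W) = vec.dim V + vec.dim W"
    by (rule vec.dim_sums_Int[OF VS WS])
  moreover have "vec.dim {x + y |x y. x \<in> V \<and> y \<in> W} \<le> vec.dim (Hs 1)"
    apply (rule vec.dim_subset)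
    using V1 W1 vec.subspace_add[OF sub[of 1]] by auto
  moreover have "vec.dim (V \<inter> W) = 0" using int0' by simp
  moreover have "vec.dim S \<le> vec.dim W"
  proof -
    have "vec.dim S = vec.dim (cconj ` (cconj ` S))" by (simp add: image_image cconj_cconj)
    also have "\<dots> \<le> vec.dim (cconj ` S)" by (rule dim_cconj_le)
    finally show ?thesis unfolding W_def by simp
  qed
  ultimately have N: "mat.dim E + sigma_zeta Hs E \<zeta> \<le> mat.dim (E_zeta E \<zeta>) + vec.dim (Hs 1)"
    using rn sig unfolding V_def by linarith
  have "int (mat.dim E) + int (sigma_zeta Hs E \<zeta>) \<le> int (mat.dim (E_zeta E \<zeta>)) + int (vec.dim (Hs 1))"
    using N by (simp only: of_nat_add[symmetric] of_nat_le_iff)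
  then show ?thesis by linarith
qed

end
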